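(* Let $H$ be a non-transitive $k$-vertex tournament. If there exists an $s$-vertex tournament $S$ with $s>k$ such that $n(H,S)\ge s^k\cdot 2^{-\binom{k}{2}}$, then $H$ is not quasirandom-forcing.
   Context: A tournament is an orientation of a complete graph; $\mathrm{Aut}(H)$ is its automorphism group. $n(H,S)$ denotes the number of $k$-element vertex subsets of $S$ that induce a tournament isomorphic to $H$. For tournaments $H,G$, $d(H,G)$ is the probability that $\lvert H\rvert$ uniformly random distinct vertices of $G$ induce a tournament isomorphic to $H$ (and $0$ if $\lvert H\rvert>\lvert G\rvert$). A sequence $(G_n)$ of tournaments with $\lvert G_n\rvert\to\infty$ is quasirandom if $\lim_{n\to\infty} d(F,G_n)=\frac{m!}{\lvert\mathrm{Aut}(F)\rvert}2^{-\binom{m}{2}}$ for every tournament $F$ with $m$ vertices. A $k$-vertex tournament $H$ is quasirandom-forcing if every sequence $(G_n)$ of tournaments with $\lvert G_n\rvert\to\infty$ and $\lim_{n\to\infty} d(H,G_n)=\frac{k!}{\lvert\mathrm{Aut}(H)\rvert}2^{-\binom{k}{2}}$ is quasirandom. *)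

theory Defs
  imports Complex_Main "HOL-Library.FuncSet"
begin

text \<open>A tournament is given by a finite vertex set (of naturals) and an arc relation;
  only arcs between vertices of the vertex set matter.\<close>
type_synonym tourn = "nat set \<times> (nat \<Rightarrow> nat \<Rightarrow> bool)"

definition verts :: "tourn \<Rightarrow> nat set" where "verts T = fst T"
definition arc :: "tourn \<Rightarrow> nat \<Rightarrow> nat \<Rightarrow> bool" where "arc T = snd T"

definition tournament :: "tourn \<Rightarrow> bool" where
  "tournament T \<longleftrightarrow> finite (verts T) \<and> (\<forall>u\<in>verts T. \<not> arc T u u) \<and>
     (\<forall>u\<in>verts T. \<forall>v\<in>verts T. u \<noteq> v \<longrightarrow> (arc T u v \<longleftrightarrow> \<not> arc T v u))"

definition transitive_tournament :: "tourn \<Rightarrow> bool" where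
  "transitive_tournament T \<longleftrightarrow>
     (\<forall>u\<in>verts T. \<forall>v\<in>verts T. \<forall>w\<in>verts T. arc T u v \<longrightarrow> arc T v w \<longrightarrow> arc T u w)"

definition tourn_iso :: "tourn \<Rightarrow> tourn \<Rightarrow> bool" where
  "tourn_iso T U \<longleftrightarrow> (\<exists>f. bij_betw f (verts T) (verts U) \<and>
     (\<forall>u\<in>verts T. \<forall>v\<in>verts T. arc T u v \<longleftrightarrow> arc U (f u) (f v)))"

definition Aut :: "tourn \<Rightarrow> (nat \<Rightarrow> nat) set" where
  "Aut T = {f \<in> verts T \<rightarrow>\<^sub>E verts T. bij_betw f (verts T) (verts T) \<and>
     (\<forall>u\<in>verts T. \<forall>v\<in>verts T. arc T u v \<longleftrightarrow> arc T (f u) (f v))}"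

definition induced :: "tourn \<Rightarrow> nat set \<Rightarrow> tourn" where
  "induced T X = (X, arc T)"

definition ncopies :: "tourn \<Rightarrow> tourn \<Rightarrow> nat" where
  "ncopies H S = card {X. X \<subseteq> verts S \<and> card X = card (verts H) \<and> tourn_iso (induced S X) H}"

definition density :: "tourn \<Rightarrow> tourn \<Rightarrow> real" where
  "density H G = (if card (verts H) > card (verts G) then 0
      else real (ncopies H G) / real (card (verts G) choose card (verts H)))"

definition random_density :: "tourn \<Rightarrow> real" where
  "random_density F = fact (card (verts F)) / real (card (Aut F)) *
      2 powr (- real (card (verts F) choose 2))"

definition quasirandom :: "(nat \<Rightarrow> tourn) \<Rightarrow> bool" where
  "quasirandom G \<longleftrightarrow> (\<forall>n. tournament (G n)) \<and>
     filterlim (\<lambda>n. card (verts (G n))) at_top sequentially \<and>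
     (\<forall>F. tournament F \<longrightarrow> (\<lambda>n. density F (G n)) \<longlonglongrightarrow> random_density F)"

definition quasirandom_forcing :: "tourn \<Rightarrow> bool" where
  "quasirandom_forcing H \<longleftrightarrow> (\<forall>G. (\<forall>n. tournament (G n)) \<and>
     filterlim (\<lambda>n. card (verts (G n))) at_top sequentially \<and>
     (\<lambda>n. density H (G n)) \<longlonglongrightarrow> random_density H \<longrightarrow> quasirandom G)"

end

theory Submission
  imports Defs
begin

lemma tourn_iso_sym:
  assumes "tourn_iso T U" shows "tourn_iso U T"
proof -
  obtain f where f: "bij_betw f (verts T) (verts U)"
    "\<forall>u\<in>verts T. \<forall>v\<in>verts T. arc T u v \<longleftrightarrow> arc U (f u) (f v)"
    using assms unfolding tourn_iso_def by blast
  let ?g = "inv_into (verts T) f"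
  have g: "bij_betw ?g (verts U) (verts T)" using f(1) by (rule bij_betw_inv_into)
  have "\<forall>u\<in>verts U. \<forall>v\<in>verts U. arc U u v \<longleftrightarrow> arc T (?g u) (?g v)"
  proof (intro ballI)
    fix u v assume uv: "u \<in> verts U" "v \<in> verts U"
    have "?g u \<in> verts T" "?g v \<in> verts T" using g uv by (auto simp: bij_betw_def)
    moreover have "f (?g u) = u" "f (?g v) = v" using f(1) uv
      by (auto simp: bij_betw_def f_inv_into_f)
    ultimately show "arc U u v \<longleftrightarrow> arc T (?g u) (?g v)" using f(2) by metis
  qed
  with g show ?thesis unfolding tourn_iso_def by blast
qed

lemma tourn_iso_trans:
  assumes "tourn_iso T U" "tourn_iso U W" shows "tourn_iso T W"
proof -
  obtain f where f: "bij_betw f (verts T) (verts U)"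
    "\<forall>u\<in>verts T. \<forall>v\<in>verts T. arc T u v \<longleftrightarrow> arc U (f u) (f v)"
    using assms(1) unfolding tourn_iso_def by blast
  obtain g where g: "bij_betw g (verts U) (verts W)"
    "\<forall>u\<in>verts U. \<forall>v\<in>verts U. arc U u v \<longleftrightarrow> arc W (g u) (g v)"
    using assms(2) unfolding tourn_iso_def by blast
  have "bij_betw (g \<circ> f) (verts T) (verts W)" using f(1) g(1) by (rule bij_betw_trans)
  moreover have "\<forall>u\<in>verts T. \<forall>v\<in>verts T. arc T u v \<longleftrightarrow> arc W ((g \<circ> f) u) ((g \<circ> f) v)"
  proof (intro ballI)
    fix u v assume "u \<in> verts T" "v \<in> verts T"
    moreover hence "f u \<in> verts U" "f v \<in> verts U" using f(1) by (auto simp: bij_betw_def)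
    ultimately show "arc T u v \<longleftrightarrow> arc W ((g \<circ> f) u) ((g \<circ> f) v)" using f(2) g(2) by simp
  qed
  ultimately show ?thesis unfolding tourn_iso_def by blast
qed

lemma tourn_iso_cong:
  assumes "verts T = verts T'" "\<And>u v. u \<in> verts T \<Longrightarrow> v \<in> verts T \<Longrightarrow> arc T u v = arc T' u v"
  shows "tourn_iso T U \<longleftrightarrow> tourn_iso T' U"
  using assms unfolding tourn_iso_def by auto

lemma iso_transitive:
  assumes "tourn_iso T U" "transitive_tournament T" shows "transitive_tournament U"
proof -
  obtain g where g: "bij_betw g (verts U) (verts T)"
    "\<forall>u\<in>verts U. \<forall>v\<in>verts U. arc U u v \<longleftrightarrow> arc T (g u) (g v)"
    using tourn_iso_sym[OF assms(1)] unfolding tourn_iso_def by blast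
  show ?thesis unfolding transitive_tournament_def
  proof (intro ballI impI)
    fix u v w assume "u \<in> verts U" "v \<in> verts U" "w \<in> verts U" "arc U u v" "arc U v w"
    moreover have "g u \<in> verts T" "g v \<in> verts T" "g w \<in> verts T"
      using g(1) calculation by (auto simp: bij_betw_def)
    ultimately show "arc U u w" using g(2) assms(2) unfolding transitive_tournament_def
      by blast
  qed
qed

lemma Aut_card:
  assumes "finite (verts T)" shows "card (Aut T) \<ge> 1"
proof -
  have "Aut T \<subseteq> verts T \<rightarrow>\<^sub>E verts T" unfolding Aut_def by auto
  moreover have "finite (verts T \<rightarrow>\<^sub>E verts T)" using assms by (simp add: finite_PiE)
  ultimately have fin: "finite (Aut T)" by (meson finite_subset)
  have "restrict id (verts T) \<in> Aut T"
    unfolding Aut_def by (auto simp: bij_betw_def inj_on_def)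
  hence "Aut T \<noteq> {}" by auto
  with fin show ?thesis by (simp add: Suc_le_eq card_gt_0_iff)
qed

lemma random_density_pos:
  assumes "finite (verts T)" shows "random_density T > 0"
  using Aut_card[OF assms] unfolding random_density_def by auto

lemma random_density_le:
  assumes "finite (verts T)"
  shows "random_density T \<le> fact (card (verts T)) * 2 powr (- real (card (verts T) choose 2))"
proof -
  have c: "real (card (Aut T)) \<ge> 1" using Aut_card[OF assms] by simp
  have "fact (card (verts T)) / real (card (Aut T)) \<le> fact (card (verts T))"
    using c by (simp add: divide_le_eq)
  thus ?thesis unfolding random_density_def by (rule mult_right_mono) simp
qed


definition Bt :: "tourn \<Rightarrow> (nat \<Rightarrow> nat) \<Rightarrow> nat \<Rightarrow> nat \<Rightarrow> nat \<Rightarrow> bool" where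
  "Bt S \<sigma> s u v = (if u mod s \<noteq> v mod s then arc S (\<sigma> (u mod s)) (\<sigma> (v mod s)) else u < v)"

definition Gj :: "tourn \<Rightarrow> (nat \<Rightarrow> nat) \<Rightarrow> nat \<Rightarrow> nat \<Rightarrow> nat \<Rightarrow> tourn" where
  "Gj S \<sigma> s n j = ({0..<n}, \<lambda>u v. if u < j \<and> v < j then Bt S \<sigma> s u v else u < v)"

lemma verts_Gj[simp]: "verts (Gj S \<sigma> s n j) = {0..<n}"
  by (simp add: Gj_def verts_def)

lemma arc_Gj: "arc (Gj S \<sigma> s n j) u v = (if u < j \<and> v < j then Bt S \<sigma> s u v else u < v)"
  by (simp add: Gj_def arc_def)

lemma verts_induced[simp]: "verts (induced T X) = X" by (simp add: induced_def verts_def)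
lemma arc_induced[simp]: "arc (induced T X) = arc T" by (simp add: induced_def arc_def)

lemma tournament_Gj:
  assumes S: "tournament S" and sig: "bij_betw \<sigma> {0..<s} (verts S)" and s: "s > 0"
  shows "tournament (Gj S \<sigma> s n j)"
  unfolding tournament_def
proof (intro conjI ballI impI)
  show "finite (verts (Gj S \<sigma> s n j))" by simp
next
  fix u assume "u \<in> verts (Gj S \<sigma> s n j)"
  show "\<not> arc (Gj S \<sigma> s n j) u u" by (simp add: arc_Gj Bt_def)
next
  fix u v assume uv: "u \<in> verts (Gj S \<sigma> s n j)" "v \<in> verts (Gj S \<sigma> s n j)" "u \<noteq> v"
  show "arc (Gj S \<sigma> s n j) u v = (\<not> arc (Gj S \<sigma> s n j) v u)"
  proof (cases "u < j \<and> v < j \<and> u mod s \<noteq> v mod s")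
    case True
    have m: "u mod s \<in> {0..<s}" "v mod s \<in> {0..<s}" using s by auto
    hence a: "\<sigma> (u mod s) \<in> verts S" "\<sigma> (v mod s) \<in> verts S" and b: "\<sigma> (u mod s) \<noteq> \<sigma> (v mod s)"
      using sig True m unfolding bij_betw_def inj_on_def by blast+
    have "arc S (\<sigma> (u mod s)) (\<sigma> (v mod s)) = (\<not> arc S (\<sigma> (v mod s)) (\<sigma> (u mod s)))"
      using S a b unfolding tournament_def by blast
    then show ?thesis using True by (simp add: arc_Gj Bt_def)
  next
    case False
    have "u < v \<longleftrightarrow> \<not> v < u" using uv(3) by linarith
    then show ?thesis using False by (simp add: arc_Gj Bt_def)
  qed
qed

definition copies :: "tourn \<Rightarrow> tourn \<Rightarrow> nat set set" where
  "copies H S = {X. X \<subseteq> verts S \<and> card X = card (verts H) \<and> tourn_iso (induced S X) H}"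

lemma ncopies_copies: "ncopies H S = card (copies H S)"
  by (simp add: ncopies_def copies_def)

lemma finite_copies: "finite (verts S) \<Longrightarrow> finite (copies H S)"
  unfolding copies_def by (rule finite_subset[of _ "Pow (verts S)"]) auto

lemma card_containing:
  assumes "j < n" "k \<ge> 1"
  shows "card {X. X \<subseteq> {0..<n} \<and> card X = k \<and> j \<in> X} \<le> (n - 1) choose (k - 1)"
proof -
  let ?Z = "{Z. Z \<subseteq> {0..<n} - {j} \<and> card Z = k - 1}"
  have "{X. X \<subseteq> {0..<n} \<and> card X = k \<and> j \<in> X} \<subseteq> insert j ` ?Z"
  proof
    fix X assume X: "X \<in> {X. X \<subseteq> {0..<n} \<and> card X = k \<and> j \<in> X}"
    hence "finite X" by (auto intro: finite_subset)
    hence "X = insert j (X - {j})" "card (X - {j}) = k - 1" using X by auto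
    moreover have "X - {j} \<subseteq> {0..<n} - {j}" using X by auto
    ultimately show "X \<in> insert j ` ?Z" by blast
  qed
  hence "card {X. X \<subseteq> {0..<n} \<and> card X = k \<and> j \<in> X} \<le> card (insert j ` ?Z)"
    by (rule card_mono[rotated]) auto
  also have "\<dots> \<le> card ?Z" by (rule card_image_le) auto
  also have "\<dots> = (n - 1) choose (k - 1)" using assms by (subst n_subsets) auto
  finally show ?thesis .
qed

lemma ncopies_step:
  assumes "j < n" "card (verts H) = k" "k \<ge> 1"
  shows "ncopies H (Gj S \<sigma> s n (Suc j)) \<le> ncopies H (Gj S \<sigma> s n j) + ((n - 1) choose (k - 1))"
proof -
  let ?Y = "{X. X \<subseteq> {0..<n} \<and> card X = k \<and> j \<in> X}"
  have sub: "copies H (Gj S \<sigma> s n (Suc j)) \<subseteq> copies H (Gj S \<sigma> s n j) \<union> ?Y"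
  proof
    fix X assume X: "X \<in> copies H (Gj S \<sigma> s n (Suc j))"
    show "X \<in> copies H (Gj S \<sigma> s n j) \<union> ?Y"
    proof (cases "j \<in> X")
      case True then show ?thesis using X assms by (auto simp: copies_def)
    next
      case False
      have "tourn_iso (induced (Gj S \<sigma> s n (Suc j)) X) H \<longleftrightarrow> tourn_iso (induced (Gj S \<sigma> s n j) X) H"
        by (rule tourn_iso_cong) (use False in \<open>auto simp: arc_Gj less_Suc_eq\<close>)
      then show ?thesis using X by (auto simp: copies_def)
    qed
  qed
  have "ncopies H (Gj S \<sigma> s n (Suc j)) \<le> card (copies H (Gj S \<sigma> s n j) \<union> ?Y)"
    unfolding ncopies_copies
    by (rule card_mono[OF _ sub]) (auto intro: finite_copies finite_subset[of _ "Pow {0..<n}"])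
  also have "\<dots> \<le> card (copies H (Gj S \<sigma> s n j)) + card ?Y" by (rule card_Un_le)
  also have "\<dots> \<le> ncopies H (Gj S \<sigma> s n j) + ((n - 1) choose (k - 1))"
    using card_containing[OF assms(1,3)] by (simp add: ncopies_copies)
  finally show ?thesis .
qed

lemma ncopies_zero:
  assumes "\<not> transitive_tournament H"
  shows "ncopies H (Gj S \<sigma> s n 0) = 0"
proof -
  have "copies H (Gj S \<sigma> s n 0) = {}"
  proof (rule ccontr)
    assume "copies H (Gj S \<sigma> s n 0) \<noteq> {}"
    then obtain X where X: "tourn_iso (induced (Gj S \<sigma> s n 0) X) H" by (auto simp: copies_def)
    have "transitive_tournament (induced (Gj S \<sigma> s n 0) X)"
      by (auto simp: transitive_tournament_def arc_Gj)
    with X assms show False using iso_transitive by blast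
  qed
  thus ?thesis by (simp add: ncopies_copies)
qed


lemma ncopies_full:
  assumes S: "tournament S" and sig: "bij_betw \<sigma> {0..<s} (verts S)" and s: "s > 0"
    and k: "card (verts H) = k"
  shows "ncopies H S * q ^ k \<le> ncopies H (Gj S \<sigma> s (s * q) (s * q))"
proof -
  let ?G = "Gj S \<sigma> s (s * q) (s * q)"
  let ?P = "copies H S"
  let ?\<tau> = "inv_into {0..<s} \<sigma>"
  define \<Phi> where "\<Phi> = (\<lambda>(Y, g). (\<lambda>y. ?\<tau> y + s * g y) ` (Y::nat set))"
  let ?D = "Sigma ?P (\<lambda>Y. Y \<rightarrow>\<^sub>E {0..<q})"
  have finS: "finite (verts S)" using S by (simp add: tournament_def)
  have tau: "?\<tau> y < s" "\<sigma> (?\<tau> y) = y" if "y \<in> verts S" for y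
    using bij_betw_apply[OF bij_betw_inv_into[OF sig] that] f_inv_into_f[of y \<sigma> "{0..<s}"]
      bij_betw_imp_surj_on[OF sig] that by auto
  have tauinj: "inj_on ?\<tau> (verts S)" using bij_betw_inv_into[OF sig] by (simp add: bij_betw_def)
  have modv: "(?\<tau> y + s * g) mod s = ?\<tau> y" "(?\<tau> y + s * g) div s = g" if "y \<in> verts S" for y g
    using tau[OF that] by auto
  have Psub: "Y \<subseteq> verts S" "card Y = k" "tourn_iso (induced S Y) H" if "Y \<in> ?P" for Y
    using that k by (auto simp: copies_def)
  have cardD: "card ?D = ncopies H S * q ^ k"
  proof -
    have "card ?D = (\<Sum>Y\<in>?P. card (Y \<rightarrow>\<^sub>E {0..<q}))"
      by (rule card_SigmaI) (auto intro: finite_copies finS finite_PiE finite_subset dest: Psub)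
    also have "\<dots> = (\<Sum>Y\<in>?P. q ^ k)"
    proof (rule sum.cong[OF refl])
      fix Y assume "Y \<in> ?P"
      hence "finite Y" "card Y = k" using Psub finS by (auto intro: finite_subset)
      thus "card (Y \<rightarrow>\<^sub>E {0..<q}) = q ^ k" by (simp add: card_PiE)
    qed
    finally show ?thesis by (simp add: ncopies_copies)
  qed
  have inj: "inj_on \<Phi> ?D"
  proof (rule inj_onI)
    fix a b assume a: "a \<in> ?D" and b: "b \<in> ?D" and e: "\<Phi> a = \<Phi> b"
    obtain Y g where ag: "a = (Y, g)" by (cases a)
    obtain Y' g' where bg: "b = (Y', g')" by (cases b)
    have Y: "Y \<subseteq> verts S" "g \<in> Y \<rightarrow>\<^sub>E {0..<q}" using a ag Psub(1)[of Y] by auto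
    have Y': "Y' \<subseteq> verts S" "g' \<in> Y' \<rightarrow>\<^sub>E {0..<q}" using b bg Psub(1)[of Y'] by auto
    have e': "(\<lambda>y. ?\<tau> y + s * g y) ` Y = (\<lambda>y. ?\<tau> y + s * g' y) ` Y'" using e ag bg by (simp add: \<Phi>_def)
    have one: "y \<in> Y' \<and> g y = g' y" if "y \<in> Y" for y
    proof -
      have "?\<tau> y + s * g y \<in> (\<lambda>y. ?\<tau> y + s * g y) ` Y" using that by (rule imageI)
      hence "?\<tau> y + s * g y \<in> (\<lambda>y. ?\<tau> y + s * g' y) ` Y'" by (simp only: e')
      then obtain y' where y': "y' \<in> Y'" "?\<tau> y + s * g y = ?\<tau> y' + s * g' y'" by auto
      have yS: "y \<in> verts S" "y' \<in> verts S" using that y' Y Y' by auto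
      have "?\<tau> y = ?\<tau> y'" using arg_cong[OF y'(2), of "\<lambda>z. z mod s"] modv(1)[OF yS(1)] modv(1)[OF yS(2)] by simp
      hence "y = y'" using tauinj yS by (auto simp: inj_on_def)
      moreover have "g y = g' y'" using arg_cong[OF y'(2), of "\<lambda>z. z div s"] modv(2)[OF yS(1)] modv(2)[OF yS(2)] by simp
      ultimately show ?thesis using y' by simp
    qed
    have two: "y \<in> Y \<and> g' y = g y" if "y \<in> Y'" for y
    proof -
      have "?\<tau> y + s * g' y \<in> (\<lambda>y. ?\<tau> y + s * g' y) ` Y'" using that by (rule imageI)
      hence "?\<tau> y + s * g' y \<in> (\<lambda>y. ?\<tau> y + s * g y) ` Y" by (simp only: e')
      then obtain y' where y': "y' \<in> Y" "?\<tau> y + s * g' y = ?\<tau> y' + s * g y'" by auto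
      have yS: "y \<in> verts S" "y' \<in> verts S" using that y' Y Y' by auto
      have "?\<tau> y = ?\<tau> y'" using arg_cong[OF y'(2), of "\<lambda>z. z mod s"] modv(1)[OF yS(1)] modv(1)[OF yS(2)] by simp
      hence "y = y'" using tauinj yS by (auto simp: inj_on_def)
      moreover have "g' y = g y'" using arg_cong[OF y'(2), of "\<lambda>z. z div s"] modv(2)[OF yS(1)] modv(2)[OF yS(2)] by simp
      ultimately show ?thesis using y' by simp
    qed
    have "Y = Y'" using one two by blast
    moreover have "g = g'"
    proof (rule ext)
      fix y show "g y = g' y"
      proof (cases "y \<in> Y")
        case True then show ?thesis using one[OF True] by simp
      next
        case False
        then have "y \<notin> Y'" using \<open>Y = Y'\<close> by simp
        then show ?thesis using PiE_arb[OF Y(2) False] PiE_arb[OF Y'(2)] by simp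
      qed
    qed
    ultimately show "a = b" using ag bg by simp
  qed
  have img: "\<Phi> ` ?D \<subseteq> copies H ?G"
  proof
    fix X assume "X \<in> \<Phi> ` ?D"
    then obtain Y g where Yg: "Y \<in> ?P" "g \<in> Y \<rightarrow>\<^sub>E {0..<q}" and X: "X = (\<lambda>y. ?\<tau> y + s * g y) ` Y"
      by (auto simp: \<Phi>_def)
    have YS: "Y \<subseteq> verts S" "card Y = k" "tourn_iso (induced S Y) H" using Psub[OF Yg(1)] by auto
    let ?\<phi> = "\<lambda>y. ?\<tau> y + s * g y"
    have phimod: "?\<phi> y mod s = ?\<tau> y" if "y \<in> Y" for y using modv YS(1) that by blast
    have phiinj: "inj_on ?\<phi> Y"
    proof (rule inj_onI)
      fix x y assume "x \<in> Y" "y \<in> Y" "?\<phi> x = ?\<phi> y"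
      hence "?\<tau> x = ?\<tau> y" using phimod by metis
      thus "x = y" using tauinj YS(1) \<open>x \<in> Y\<close> \<open>y \<in> Y\<close> by (auto simp: inj_on_def)
    qed
    have lt: "?\<phi> y < s * q" if "y \<in> Y" for y
    proof -
      have "g y < q" using Yg(2) that by auto
      hence "Suc (g y) \<le> q" by simp
      hence "s * Suc (g y) \<le> s * q" by (rule mult_le_mono2)
      moreover have "?\<tau> y < s" using tau YS(1) that by auto
      ultimately show ?thesis by simp
    qed
    have Xsub: "X \<subseteq> {0..<s * q}" using X lt by auto
    have cX: "card X = k" using X phiinj YS(2) by (simp add: card_image)
    define h where "h = (\<lambda>z. \<sigma> (z mod s))"
    have hphi: "h (?\<phi> y) = y" if "y \<in> Y" for y
      using phimod[OF that] tau YS(1) that h_def by auto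
    have hbij: "bij_betw h X Y"
    proof -
      have "inj_on h X"
      proof (rule inj_onI)
        fix a b assume "a \<in> X" "b \<in> X" "h a = h b"
        then obtain x y where "x \<in> Y" "y \<in> Y" "a = ?\<phi> x" "b = ?\<phi> y" using X by auto
        thus "a = b" using hphi \<open>h a = h b\<close> by metis
      qed
      moreover have "h ` X = Y" using X hphi by (force simp: image_image)
      ultimately show ?thesis by (simp add: bij_betw_def)
    qed
    have arcs: "arc (induced ?G X) a b \<longleftrightarrow> arc (induced S Y) (h a) (h b)" if abX: "a \<in> X" "b \<in> X" for a b
    proof -
      obtain x y where xy: "x \<in> Y" "y \<in> Y" "a = ?\<phi> x" "b = ?\<phi> y" using X abX by auto
      have ab: "a < s * q" "b < s * q" using xy lt by auto
      show ?thesis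
      proof (cases "x = y")
        case True
        have "\<not> arc S x x" using S YS(1) xy(1) by (auto simp: tournament_def)
        then show ?thesis using True xy ab hphi by (simp add: arc_Gj Bt_def)
      next
        case False
        hence "a mod s \<noteq> b mod s" using xy phimod tauinj YS(1) by (metis inj_onD subsetD)
        then show ?thesis using ab by (simp add: arc_Gj Bt_def h_def)
      qed
    qed
    have "tourn_iso (induced ?G X) (induced S Y)"
      unfolding tourn_iso_def using hbij arcs by auto
    hence "tourn_iso (induced ?G X) H" using YS(3) by (rule tourn_iso_trans)
    thus "X \<in> copies H ?G" using Xsub cX k by (simp add: copies_def)
  qed
  have "card ?D \<le> card (copies H ?G)"
    by (rule card_inj_on_le[OF inj img]) (simp add: finite_copies)
  thus ?thesis using cardD by (simp add: ncopies_copies)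
qed

lemma ncopies_TT:
  assumes fin: "finite (verts G)" and A: "A \<subseteq> verts G" "card A = L"
    and arcA: "\<And>u v. u \<in> A \<Longrightarrow> v \<in> A \<Longrightarrow> arc G u v \<longleftrightarrow> u < v"
  shows "L choose K \<le> ncopies ({0..<K}, (<)) G"
proof -
  let ?F = "({0..<K}, (<)) :: tourn"
  have vF: "verts ?F = {0..<K}" and aF: "arc ?F = (<)" by (simp_all add: verts_def arc_def)
  have "{X. X \<subseteq> A \<and> card X = K} \<subseteq> copies ?F G"
  proof
    fix X assume X: "X \<in> {X. X \<subseteq> A \<and> card X = K}"
    have finX: "finite X" using X fin A by (auto intro: finite_subset)
    let ?xs = "sorted_list_of_set X"
    have d: "distinct ?xs" and l: "length ?xs = K" and st: "sorted_wrt (<) ?xs" and sx: "set ?xs = X"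
      using finX X by auto
    have bij: "bij_betw ((!) ?xs) {0..<K} X"
      by (rule bij_betw_nth[OF d]) (use X in \<open>auto simp: l sx lessThan_atLeast0\<close>)
    have mono: "i < j \<longleftrightarrow> ?xs ! i < ?xs ! j" if "i < K" "j < K" for i j
    proof
      assume "i < j" thus "?xs ! i < ?xs ! j" using st that l by (simp add: sorted_wrt_nth_less)
    next
      assume a: "?xs ! i < ?xs ! j"
      show "i < j"
      proof (rule ccontr)
        assume "\<not> i < j"
        hence "j < i \<or> j = i" by auto
        thus False using a st that l sorted_wrt_nth_less[OF st, of j i] by auto
      qed
    qed
    have "tourn_iso ?F (induced G X)"
      unfolding tourn_iso_def vF aF
    proof (intro exI conjI)
      show "bij_betw ((!) ?xs) {0..<K} (verts (induced G X))" using bij by simp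
      show "\<forall>u\<in>{0..<K}. \<forall>v\<in>{0..<K}. u < v \<longleftrightarrow> arc (induced G X) (?xs ! u) (?xs ! v)"
      proof (intro ballI)
        fix u v assume "u \<in> {0..<K}" "v \<in> {0..<K}"
        moreover hence "?xs ! u \<in> A" "?xs ! v \<in> A" using nth_mem[of u ?xs] nth_mem[of v ?xs] sx l X by auto
        ultimately show "u < v \<longleftrightarrow> arc (induced G X) (?xs ! u) (?xs ! v)" using mono arcA by simp
      qed
    qed
    thus "X \<in> copies ?F G" using X A vF by (auto simp: copies_def intro: tourn_iso_sym)
  qed
  hence "card {X. X \<subseteq> A \<and> card X = K} \<le> card (copies ?F G)"
    by (rule card_mono[rotated]) (simp add: finite_copies fin)
  moreover have "card {X. X \<subseteq> A \<and> card X = K} = L choose K"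
    using A fin by (simp add: n_subsets finite_subset)
  ultimately show ?thesis by (simp add: ncopies_copies)
qed


lemma pick_j:
  fixes f :: "nat \<Rightarrow> real"
  assumes "f 0 < r" "r \<le> f n" "\<And>j. j < n \<Longrightarrow> f (Suc j) \<le> f j + e"
  shows "\<exists>j\<le>n. r \<le> f j \<and> f j \<le> r + e"
proof -
  define j where "j = (LEAST j. r \<le> f j)"
  have rj: "r \<le> f j" unfolding j_def by (rule LeastI[of _ n]) (rule assms(2))
  have jn: "j \<le> n" unfolding j_def by (rule Least_le) (rule assms(2))
  have j0: "j \<noteq> 0"
  proof
    assume "j = 0" with rj assms(1) show False by simp
  qed
  then obtain i where i: "j = Suc i" by (cases j) auto
  have "\<not> r \<le> f i" unfolding j_def using i j_def not_less_Least[of i "\<lambda>j. r \<le> f j"] by simp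
  moreover have "f j \<le> f i + e" using assms(3)[of i] i jn by simp
  ultimately show ?thesis using rj jn by (intro exI[of _ j]) simp
qed

lemma exists_K: "\<exists>M::nat. c * (2 * M + 1) < 2 ^ M"
proof -
  define t where "t = 4 * c + 2"
  have "t < 2 ^ t" by (rule less_exp)
  hence "t * t < 2 ^ t * 2 ^ t" by (simp add: mult_strict_mono)
  hence a: "t * t < 2 ^ (2 * t)" by (simp add: power_add mult_2)
  have "c * (2 * (2 * t) + 1) < t * t" unfolding t_def by (simp add: algebra_simps)
  with a show ?thesis by (intro exI[of _ "2 * t"]) simp
qed

lemma dens_eq:
  assumes "card (verts H) = k" "k \<le> n"
  shows "density H (Gj S \<sigma> s n j) = real (ncopies H (Gj S \<sigma> s n j)) / real (n choose k)"
  using assms by (simp add: density_def)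


lemma lower_TT:
  assumes S: "tournament S" and sig: "bij_betw \<sigma> {0..<s} (verts S)" and s0: "s > 0"
    and j: "j \<le> s * q" and KL: "K \<le> q div 2" and q2: "q \<ge> 2" and K1: "K \<ge> 1"
  shows "fact K * (1 / (4 * real s * real K)) ^ K \<le> density ({0..<K}, (<)) (Gj S \<sigma> s (s * q) j)"
proof -
  define L where "L = q div 2"
  define n where "n = s * q"
  let ?G = "Gj S \<sigma> s n j"
  have LL: "L + L \<le> q" unfolding L_def by simp
  have sL: "s * L + L \<le> n"
  proof -
    have "L \<le> s * L" using s0 by simp
    hence "s * L + L \<le> s * (L + L)" by (simp add: algebra_simps)
    also have "\<dots> \<le> s * q" using LL by (rule mult_le_mono2)
    finally show ?thesis unfolding n_def .
  qed
  have "\<exists>A. A \<subseteq> {0..<n} \<and> card A = L \<and> (\<forall>u\<in>A. \<forall>v\<in>A. arc ?G u v \<longleftrightarrow> u < v)"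
  proof (cases "s * L \<le> j")
    case True
    let ?A = "(\<lambda>i. s * i) ` {0..<L}"
    have inj: "inj_on (\<lambda>i. s * i) {0..<L}" using s0 by (simp add: inj_on_def)
    have "?A \<subseteq> {0..<n}"
    proof
      fix x assume "x \<in> ?A"
      then obtain i where "i < L" "x = s * i" by auto
      hence "x < s * L" using s0 by simp
      thus "x \<in> {0..<n}" using sL by simp
    qed
    moreover have "card ?A = L" using inj by (simp add: card_image)
    moreover have "\<forall>u\<in>?A. \<forall>v\<in>?A. arc ?G u v \<longleftrightarrow> u < v"
    proof (intro ballI)
      fix u v assume "u \<in> ?A" "v \<in> ?A"
      then obtain a b where "u = s * a" "v = s * b" by auto
      hence "u mod s = v mod s" by simp
      thus "arc ?G u v \<longleftrightarrow> u < v" by (simp add: arc_Gj Bt_def)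
    qed
    ultimately show ?thesis by blast
  next
    case False
    let ?A = "{s * L..<s * L + L}"
    have "?A \<subseteq> {0..<n}" using sL by auto
    moreover have "card ?A = L" by simp
    moreover have "\<forall>u\<in>?A. \<forall>v\<in>?A. arc ?G u v \<longleftrightarrow> u < v"
      using False by (auto simp: arc_Gj)
    ultimately show ?thesis by blast
  qed
  then obtain A where A: "A \<subseteq> {0..<n}" "card A = L" "\<forall>u\<in>A. \<forall>v\<in>A. arc ?G u v \<longleftrightarrow> u < v" by blast
  have nc: "L choose K \<le> ncopies ({0..<K}, (<)) ?G"
    by (rule ncopies_TT) (use A in auto)
  have KLn: "K \<le> L" "L \<le> n" using KL sL unfolding L_def by auto
  have Kn: "K \<le> n" using KLn by simp
  have vF: "card (verts (({0..<K}, (<)) :: tourn)) = K" by (simp add: verts_def)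
  have dens: "density ({0..<K}, (<)) ?G = real (ncopies ({0..<K}, (<)) ?G) / real (n choose K)"
    using Kn vF by (simp add: density_def)
  have Cpos: "real (n choose K) > 0" using Kn by simp
  have npos: "real n > 0" using Kn K1 by simp
  have Lpos: "real L > 0" using KLn K1 by simp
  have Kpos: "real K > 0" using K1 by simp
  have bf: "real (n choose K) * fact K \<le> real n ^ K"
    using binomial_fact_pow[of n K] by (metis of_nat_fact of_nat_le_iff of_nat_mult of_nat_power)
  have bl: "(real L / real K) ^ K \<le> real (L choose K)" using binomial_ge_n_over_k_pow_k[OF KLn(1)] by simp
  have 4: "real n \<le> 4 * real s * real L"
  proof -
    have "q \<le> 4 * L" unfolding L_def using q2 by linarith
    hence "s * q \<le> s * (4 * L)" by (rule mult_le_mono2)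
    hence "real (s * q) \<le> real (s * (4 * L))" by (simp only: of_nat_le_iff)
    thus ?thesis unfolding n_def by simp
  qed
  have b1: "1 / (4 * real s * real K) \<le> real L / (real K * real n)"
    using 4 npos Lpos Kpos s0 by (simp add: field_simps)
  have "fact K * (1 / (4 * real s * real K)) ^ K \<le> fact K * (real L / (real K * real n)) ^ K"
    by (intro mult_left_mono power_mono b1) simp_all
  also have "\<dots> = fact K * (real L / real K) ^ K / real n ^ K"
    by (simp add: power_divide power_mult_distrib field_simps)
  also have "\<dots> \<le> fact K * (real L / real K) ^ K / (real (n choose K) * fact K)"
    by (intro divide_left_mono bf) (use Cpos npos in \<open>auto intro!: mult_pos_pos\<close>)
  also have "\<dots> = (real L / real K) ^ K / real (n choose K)" by simp
  also have "\<dots> \<le> real (L choose K) / real (n choose K)"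
    by (intro divide_right_mono bl) simp
  also have "\<dots> \<le> real (ncopies ({0..<K}, (<)) ?G) / real (n choose K)"
    by (intro divide_right_mono) (use nc in simp_all)
  finally show ?thesis using dens unfolding n_def by simp
qed


theorem proposition4p1:
  fixes H S :: tourn and k s :: nat
  assumes "tournament H" and "card (verts H) = k" and "\<not> transitive_tournament H"
    and "tournament S" and "card (verts S) = s" and "s > k"
    and "real (ncopies H S) \<ge> real s ^ k * 2 powr (- real (k choose 2))"
  shows "\<not> quasirandom_forcing H"
proof
  assume qf: "quasirandom_forcing H"
  note H = assms(1) and kH = assms(2) and ntr = assms(3) and S = assms(4) and sS = assms(5)
    and sk = assms(6) and hyp = assms(7)
  have finH: "finite (verts H)" using H by (simp add: tournament_def)
  have finS: "finite (verts S)" using S by (simp add: tournament_def)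
  have k1: "k \<ge> 1"
  proof (rule ccontr)
    assume "\<not> k \<ge> 1"
    hence "card (verts H) = 0" using kH by simp
    hence "verts H = {}" using finH by simp
    hence "transitive_tournament H" by (simp add: transitive_tournament_def)
    with ntr show False by simp
  qed
  have s0: "s > 0" using sk by simp
  obtain \<sigma> where sig: "bij_betw \<sigma> {0..<s} (verts S)"
    using ex_bij_betw_nat_finite[OF finS] sS by auto
  define r where "r = random_density H"
  define P where "P = (2::real) powr (- real (k choose 2))"
  have P0: "P \<ge> 0" by (simp add: P_def)
  have r0: "r > 0" unfolding r_def by (rule random_density_pos[OF finH])
  have rle: "r \<le> fact k * P" unfolding r_def P_def using random_density_le[OF finH] kH by simp
  define dd where "dd m j = density H (Gj S \<sigma> s (s * Suc m) j)" for m j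
  have ex: "\<exists>j\<le>s * Suc m. r \<le> dd m j \<and> dd m j \<le> r + real k / real (s * Suc m)" for m
  proof (rule pick_j)
    let ?n = "s * Suc m"
    have kn: "k \<le> ?n" using sk by (simp add: less_imp_le_nat trans_le_add1)
    have Cpos: "real (?n choose k) > 0" using kn by simp
    show "dd m 0 < r" using r0 unfolding dd_def dens_eq[OF kH kn] ncopies_zero[OF ntr] by simp
    have "real (ncopies H S * Suc m ^ k) \<le> real (ncopies H (Gj S \<sigma> s ?n ?n))"
      using ncopies_full[OF S sig s0 kH, of "Suc m"] by linarith
    moreover have "real ?n ^ k * P \<le> real (ncopies H S * Suc m ^ k)"
    proof -
      have "real ?n ^ k * P = (real s ^ k * P) * real (Suc m) ^ k"
        by (simp only: of_nat_mult power_mult_distrib mult_ac)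
      also have "\<dots> \<le> real (ncopies H S) * real (Suc m) ^ k"
        using hyp by (intro mult_right_mono) (simp_all add: P_def)
      finally show ?thesis by simp
    qed
    ultimately have nc: "real ?n ^ k * P \<le> real (ncopies H (Gj S \<sigma> s ?n ?n))" by linarith
    have bf: "real (?n choose k) * fact k \<le> real ?n ^ k"
      using binomial_fact_pow[of ?n k] by (metis of_nat_fact of_nat_le_iff of_nat_mult of_nat_power)
    have "fact k * P * real (?n choose k) \<le> real ?n ^ k * P"
      using mult_right_mono[OF bf P0] by (simp add: algebra_simps)
    hence "fact k * P \<le> real ?n ^ k * P / real (?n choose k)"
      using Cpos by (simp add: pos_le_divide_eq)
    also have "\<dots> \<le> real (ncopies H (Gj S \<sigma> s ?n ?n)) / real (?n choose k)"
      using nc Cpos by (simp add: divide_right_mono)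
    finally show "r \<le> dd m ?n" using rle unfolding dd_def dens_eq[OF kH kn] by linarith
    fix j assume "j < ?n"
    have st: "real (ncopies H (Gj S \<sigma> s ?n (Suc j))) \<le> real (ncopies H (Gj S \<sigma> s ?n j)) + real ((?n - 1) choose (k - 1))"
      using ncopies_step[OF \<open>j < ?n\<close> kH k1, of S \<sigma> s] by linarith
    have ab: "real k * real (?n choose k) = real ?n * real ((?n - 1) choose (k - 1))"
      using binomial_absorption[of "k - 1" ?n] k1 by (metis Suc_diff_1 less_le_trans of_nat_mult zero_less_one)
    have q: "real ((?n - 1) choose (k - 1)) / real (?n choose k) = real k / real ?n"
    proof -
      have e: "real ((?n - 1) choose (k - 1)) * real ?n = real k * real (?n choose k)"
        using ab by (simp only: mult.commute)
      have y: "real (?n choose k) \<noteq> 0" using Cpos by linarith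
      have z: "real ?n \<noteq> 0" using s0 by (simp only: of_nat_eq_0_iff mult_eq_0_iff) simp
      show ?thesis by (rule iffD2[OF frac_eq_eq[OF y z] e])
    qed
    have "dd m (Suc j) \<le> (real (ncopies H (Gj S \<sigma> s ?n j)) + real ((?n - 1) choose (k - 1))) / real (?n choose k)"
      unfolding dd_def dens_eq[OF kH kn] using st Cpos by (simp add: divide_right_mono)
    also have "\<dots> = dd m j + real k / real ?n"
      unfolding dd_def dens_eq[OF kH kn] q[symmetric] by (simp add: add_divide_distrib)
    finally show "dd m (Suc j) \<le> dd m j + real k / real ?n" .
  qed
  hence "\<forall>m. \<exists>j. j \<le> s * Suc m \<and> r \<le> dd m j \<and> dd m j \<le> r + real k / real (s * Suc m)" by blast
  from choice[OF this] obtain jsel where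
    jsel: "\<forall>m. jsel m \<le> s * Suc m \<and> r \<le> dd m (jsel m) \<and> dd m (jsel m) \<le> r + real k / real (s * Suc m)"
    by blast
  define G where "G m = Gj S \<sigma> s (s * Suc m) (jsel m)" for m
  have tourG: "\<forall>m. tournament (G m)" unfolding G_def using tournament_Gj[OF S sig s0] by blast
  have limG: "filterlim (\<lambda>m. card (verts (G m))) at_top sequentially"
    unfolding filterlim_at_top eventually_sequentially
  proof (intro allI exI allI impI)
    fix Z m :: nat assume Zm: "Z \<le> m"
    have "Suc m \<le> s * Suc m" using mult_le_mono1[of 1 s "Suc m"] s0 by simp
    thus "Z \<le> card (verts (G m))" using Zm unfolding G_def by simp
  qed
  have densG: "(\<lambda>m. density H (G m)) \<longlonglongrightarrow> r"
  proof (rule tendsto_sandwich[of "\<lambda>_. r" _ _ "\<lambda>m. r + (real k / real s) * inverse (real (Suc m))"])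
    show "\<forall>\<^sub>F m in sequentially. r \<le> density H (G m)"
    proof (rule always_eventually, rule allI)
      fix m show "r \<le> density H (G m)" using jsel unfolding G_def dd_def by blast
    qed
    show "\<forall>\<^sub>F m in sequentially. density H (G m) \<le> r + (real k / real s) * inverse (real (Suc m))"
    proof (rule always_eventually, rule allI)
      fix m
      have eq: "real k / real (s * Suc m) = (real k / real s) * inverse (real (Suc m))"
        by (simp only: of_nat_mult divide_inverse inverse_mult_distrib mult_ac)
      have "density H (G m) \<le> r + real k / real (s * Suc m)" using jsel unfolding G_def dd_def by blast
      thus "density H (G m) \<le> r + (real k / real s) * inverse (real (Suc m))" by (simp only: eq)
    qed
    show "(\<lambda>_. r) \<longlonglongrightarrow> r" by simp
    have "(\<lambda>m. (real k / real s) * inverse (real (Suc m))) \<longlonglongrightarrow> 0"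
      by (rule tendsto_mult_right_zero) (rule LIMSEQ_inverse_real_of_nat)
    from tendsto_add[OF tendsto_const[of r] this]
    show "(\<lambda>m. r + (real k / real s) * inverse (real (Suc m))) \<longlonglongrightarrow> r" by simp
  qed
  have "quasirandom G" using qf tourG limG densG unfolding quasirandom_forcing_def r_def by blast
  hence conv: "\<And>F. tournament F \<Longrightarrow> (\<lambda>m. density F (G m)) \<longlonglongrightarrow> random_density F"
    unfolding quasirandom_def by blast
  obtain M where M: "(4 * s) * (2 * M + 1) < 2 ^ M" using exists_K by blast
  define K where "K = 2 * M + 1"
  define F where "F = (({0..<K}, (<)) :: tourn)"
  have vF: "verts F = {0..<K}" and aF: "arc F = (<)" by (simp_all add: F_def verts_def arc_def)
  have tF: "tournament F" unfolding tournament_def vF aF by auto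
  have K1: "K \<ge> 1" unfolding K_def by simp
  have ch: "K choose 2 = M * K"
  proof -
    have "K choose 2 = K * (K - 1) div 2" by (rule choose_two)
    also have "K * (K - 1) = (M * K) * 2" unfolding K_def by (simp add: algebra_simps)
    finally show ?thesis by simp
  qed
  have Mr: "4 * real s * real K < 2 ^ M"
  proof -
    have "real ((4 * s) * (2 * M + 1)) < real ((2::nat) ^ M)" using M by (simp only: of_nat_less_iff)
    thus ?thesis unfolding K_def by (simp add: algebra_simps)
  qed
  have pos4: "4 * real s * real K > 0" using s0 K1 by simp
  define c where "c = fact K * (1 / (4 * real s * real K)) ^ K"
  have "random_density F \<le> fact K * 2 powr (- real (K choose 2))"
    using random_density_le[of F] vF by simp
  also have "2 powr (- real (K choose 2)) = (1 / 2 ^ M) ^ K"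
    unfolding ch by (simp add: powr_minus powr_realpow[symmetric] power_mult power_one_over powr_mult_base
      flip: powr_realpow of_nat_mult) (simp add: powr_powr[symmetric] powr_realpow power_mult inverse_eq_divide)
  also have "fact K * (1 / 2 ^ M) ^ K < c"
  proof -
    have "1 / (2::real) ^ M < 1 / (4 * real s * real K)"
      using Mr pos4 by (simp add: divide_strict_left_mono)
    hence "(1 / (2::real) ^ M) ^ K < (1 / (4 * real s * real K)) ^ K"
      using K1 by (intro power_strict_mono) simp_all
    thus ?thesis unfolding c_def by simp
  qed
  finally have rlt: "random_density F < c" .
  have "\<exists>N. \<forall>m\<ge>N. c \<le> density F (G m)"
  proof (intro exI allI impI)
    fix m assume m: "2 * K + 2 \<le> m"
    have "c \<le> density ({0..<K}, (<)) (Gj S \<sigma> s (s * Suc m) (jsel m))"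
      unfolding c_def
      by (rule lower_TT[OF S sig s0]) (use jsel m K1 in auto)
    thus "c \<le> density F (G m)" unfolding F_def G_def .
  qed
  with conv[OF tF] have "c \<le> random_density F" by (rule LIMSEQ_le_const)
  with rlt show False by simp
qed

end
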